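(* Let $C\subseteq\{0,1\}^m$ be a code and let $t:[m]\to\mathbb{Z}$ be any function. For $s\in\mathbb{Z}$ let $I_s=t^{-1}(s)\subseteq[m]$. For a nonzero $c\in C$ let $\mathrm{type}(c)=\max\{t(i): c_i=1\}$, and for $s\in\mathbb{Z}$ let $C_s=\{c\in C\setminus\{0\} : \mathrm{type}(c)=s\}$. Then \[ \sum_{s\in\mathbb{Z}} \mathrm{CL}\big((C_s\cup C_{s+1})|_{I_s}\big)\le 2\,\mathrm{CL}(C). \]
   Context: For $S\subseteq[m]$ and $D\subseteq\{0,1\}^m$, $D|_S=\{c|_S : c\in D\}\subseteq\{0,1\}^S$. A chain of length $\ell$ in a code $D\subseteq\{0,1\}^A$ is a pair of injective maps $a:[\ell]\to A$ and $c:[\ell]\to D$ such that $c(i)_{a(i)}=1$ for all $i$, and $c(i)_{a(j)}=0$ for all $1\le i<j\le\ell$; the chain length $\mathrm{CL}(D)$ is the maximum length of a chain in $D$ ($0$ if none exists, in particular for $D$ empty). *)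

theory Defs
  imports Main "HOL-Library.FuncSet" "HOL-Library.Groups_Big_Fun"
begin

text \<open>Binary words on a coordinate set A are the extensional functions in
  the extensional function space from A to {0,1}; a code on A is a subset of this set.
  The index set [m] is {1..m}.\<close>

definition restr_code :: "nat set \<Rightarrow> (nat \<Rightarrow> nat) set \<Rightarrow> (nat \<Rightarrow> nat) set" where
  "restr_code S D = (\<lambda>c. restrict c S) ` D"

definition is_chain ::
  "nat set \<Rightarrow> (nat \<Rightarrow> nat) set \<Rightarrow> nat \<Rightarrow> (nat \<Rightarrow> nat) \<Rightarrow> (nat \<Rightarrow> (nat \<Rightarrow> nat)) \<Rightarrow> bool" where
  "is_chain A D l a c \<longleftrightarrow>
     inj_on a {1..l} \<and> a ` {1..l} \<subseteq> A \<and>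
     inj_on c {1..l} \<and> c ` {1..l} \<subseteq> D \<and>
     (\<forall>i\<in>{1..l}. c i (a i) = 1) \<and>
     (\<forall>i j. 1 \<le> i \<and> i < j \<and> j \<le> l \<longrightarrow> c i (a j) = 0)"

definition CL :: "nat set \<Rightarrow> (nat \<Rightarrow> nat) set \<Rightarrow> nat" where
  "CL A D = Sup {l. \<exists>a c. is_chain A D l a c}"

definition zero_word :: "nat \<Rightarrow> (nat \<Rightarrow> nat)" where
  "zero_word m = restrict (\<lambda>_. 0) {1..m}"

definition ctype :: "nat \<Rightarrow> (nat \<Rightarrow> int) \<Rightarrow> (nat \<Rightarrow> nat) \<Rightarrow> int" where
  "ctype m t c = Max {t i | i. i \<in> {1..m} \<and> c i = 1}"

definition code_layer :: "nat \<Rightarrow> (nat \<Rightarrow> int) \<Rightarrow> (nat \<Rightarrow> nat) set \<Rightarrow> int \<Rightarrow> (nat \<Rightarrow> nat) set" where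
  "code_layer m t C s = {c \<in> C. c \<noteq> zero_word m \<and> ctype m t c = s}"

definition level_set :: "nat \<Rightarrow> (nat \<Rightarrow> int) \<Rightarrow> int \<Rightarrow> nat set" where
  "level_set m t s = {i \<in> {1..m}. t i = s}"

end

theory Submission
  imports Defs
begin

lemma chain_len_le:
  assumes "is_chain A D l a c" "finite A"
  shows "l \<le> card A"
proof -
  have "card {1..l} \<le> card A"
    using assms by (intro card_inj_on_le[of a]) (auto simp: is_chain_def)
  thus ?thesis by simp
qed

lemma chain_zero: "is_chain A D 0 a c"
  by (simp add: is_chain_def)

lemma CL_set_props:
  assumes "finite A"
  shows "bdd_above {l. \<exists>a c. is_chain A D l a c}" "{l. \<exists>a c. is_chain A D l a c} \<noteq> {}"
proof -
  show "bdd_above {l. \<exists>a c. is_chain A D l a c}"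
    unfolding bdd_above_def using chain_len_le[OF _ assms] by blast
  show "{l. \<exists>a c. is_chain A D l a c} \<noteq> {}"
    using chain_zero[of A D] by blast
qed

lemma CL_upper:
  assumes "is_chain A D l a c" "finite A"
  shows "l \<le> CL A D"
  unfolding CL_def using CL_set_props[OF assms(2)] assms(1)
  by (intro cSup_upper) auto

lemma CL_attained:
  assumes "finite A"
  shows "\<exists>a c. is_chain A D (CL A D) a c"
proof -
  let ?X = "{l. \<exists>a c. is_chain A D l a c}"
  have "finite ?X" using CL_set_props(1)[OF assms] bdd_above_nat by blast
  hence "Sup ?X \<in> ?X" using CL_set_props(2)[OF assms]
    by (metis Max_in cSup_eq_Max)
  thus ?thesis unfolding CL_def by blast
qed

lemma chain_mono:
  assumes "is_chain A D l a c" "A \<subseteq> B"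
  shows "is_chain B D l a c"
  using assms by (auto simp: is_chain_def)

lemma chain_D:
  assumes c2: "is_chain A2 D l2 a2 c2"
  shows "inj_on a2 {1..l2}" and "\<And>i. i \<in> {1..l2} \<Longrightarrow> a2 i \<in> A2"
    and "inj_on c2 {1..l2}" and "\<And>i. i \<in> {1..l2} \<Longrightarrow> c2 i \<in> D"
    and "\<And>i. i \<in> {1..l2} \<Longrightarrow> c2 i (a2 i) = 1"
    and "\<And>i j. 1 \<le> i \<Longrightarrow> i < j \<Longrightarrow> j \<le> l2 \<Longrightarrow> c2 i (a2 j) = 0"
  using c2 unfolding is_chain_def by (meson image_subset_iff)+

lemma chain_concat:
  assumes c1: "is_chain A1 D l1 a1 c1" and c2: "is_chain A2 D l2 a2 c2"
    and dA: "A1 \<inter> A2 = {}" and dC: "c1 ` {1..l1} \<inter> c2 ` {1..l2} = {}"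
    and cross: "\<forall>i\<in>{1..l1}. \<forall>j\<in>{1..l2}. c1 i (a2 j) = 0"
  shows "is_chain (A1 \<union> A2) D (l1 + l2) (\<lambda>i. if i \<le> l1 then a1 i else a2 (i - l1))
           (\<lambda>i. if i \<le> l1 then c1 i else c2 (i - l1))"
proof -
  let ?a = "\<lambda>i. if i \<le> l1 then a1 i else a2 (i - l1)"
  let ?c = "\<lambda>i. if i \<le> l1 then c1 i else c2 (i - l1)"
  note a1i = chain_D(1)[OF c1] and a1r = chain_D(2)[OF c1] and c1i = chain_D(3)[OF c1]
    and c1r = chain_D(4)[OF c1] and c1d = chain_D(5)[OF c1] and c1o = chain_D(6)[OF c1]
  note a2i = chain_D(1)[OF c2] and a2r = chain_D(2)[OF c2] and c2i = chain_D(3)[OF c2]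
    and c2r = chain_D(4)[OF c2] and c2d = chain_D(5)[OF c2] and c2o = chain_D(6)[OF c2]
  have ia: "inj_on ?a {1..l1+l2}"
  proof (rule inj_onI)
    fix i j assume i: "i \<in> {1..l1+l2}" and j: "j \<in> {1..l1+l2}" and e: "?a i = ?a j"
    show "i = j"
    proof (cases "i \<le> l1")
      case iT: True
      show ?thesis
      proof (cases "j \<le> l1")
        case True
        hence "a1 i = a1 j" using e iT by simp
        moreover have "i \<in> {1..l1}" "j \<in> {1..l1}" using i j iT True by auto
        ultimately show ?thesis using a1i by (meson inj_onD)
      next
        case False
        hence "a1 i = a2 (j - l1)" using e iT by simp
        moreover have "a1 i \<in> A1" using i iT by (intro a1r) auto
        moreover have "a2 (j - l1) \<in> A2" using j False by (intro a2r) auto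
        ultimately show ?thesis using dA by (metis disjoint_iff)
      qed
    next
      case iF: False
      show ?thesis
      proof (cases "j \<le> l1")
        case True
        hence "a1 j = a2 (i - l1)" using e iF by simp
        moreover have "a1 j \<in> A1" using j True by (intro a1r) auto
        moreover have "a2 (i - l1) \<in> A2" using i iF by (intro a2r) auto
        ultimately show ?thesis using dA by (metis disjoint_iff)
      next
        case False
        hence "a2 (i - l1) = a2 (j - l1)" using e iF by simp
        moreover have "i - l1 \<in> {1..l2}" "j - l1 \<in> {1..l2}" using i j iF False by auto
        ultimately have "i - l1 = j - l1" using a2i by (meson inj_onD)
        thus ?thesis using iF False by simp
      qed
    qed
  qed
  have ic: "inj_on ?c {1..l1+l2}"
  proof (rule inj_onI)
    fix i j assume i: "i \<in> {1..l1+l2}" and j: "j \<in> {1..l1+l2}" and e: "?c i = ?c j"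
    show "i = j"
    proof (cases "i \<le> l1")
      case iT: True
      show ?thesis
      proof (cases "j \<le> l1")
        case True
        hence "c1 i = c1 j" using e iT by simp
        moreover have "i \<in> {1..l1}" "j \<in> {1..l1}" using i j iT True by auto
        ultimately show ?thesis using c1i by (meson inj_onD)
      next
        case False
        hence "c1 i = c2 (j - l1)" using e iT by simp
        moreover have "c1 i \<in> c1 ` {1..l1}" using i iT by (intro imageI) auto
        moreover have "c2 (j - l1) \<in> c2 ` {1..l2}" using j False by (intro imageI) auto
        ultimately show ?thesis using dC by (metis disjoint_iff)
      qed
    next
      case iF: False
      show ?thesis
      proof (cases "j \<le> l1")
        case True
        hence "c1 j = c2 (i - l1)" using e iF by simp
        moreover have "c1 j \<in> c1 ` {1..l1}" using j True by (intro imageI) auto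
        moreover have "c2 (i - l1) \<in> c2 ` {1..l2}" using i iF by (intro imageI) auto
        ultimately show ?thesis using dC by (metis disjoint_iff)
      next
        case False
        hence "c2 (i - l1) = c2 (j - l1)" using e iF by simp
        moreover have "i - l1 \<in> {1..l2}" "j - l1 \<in> {1..l2}" using i j iF False by auto
        ultimately have "i - l1 = j - l1" using c2i by (meson inj_onD)
        thus ?thesis using iF False by simp
      qed
    qed
  qed
  have ra: "?a ` {1..l1+l2} \<subseteq> A1 \<union> A2"
  proof
    fix x assume "x \<in> ?a ` {1..l1+l2}"
    then obtain i where i: "i \<in> {1..l1+l2}" "x = ?a i" by blast
    show "x \<in> A1 \<union> A2"
    proof (cases "i \<le> l1")
      case True
      have "a1 i \<in> A1" using i True by (intro a1r) auto
      thus ?thesis using i True by simp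
    next
      case False
      have "a2 (i - l1) \<in> A2" using i False by (intro a2r) auto
      thus ?thesis using i False by simp
    qed
  qed
  have rc: "?c ` {1..l1+l2} \<subseteq> D"
  proof
    fix x assume "x \<in> ?c ` {1..l1+l2}"
    then obtain i where i: "i \<in> {1..l1+l2}" "x = ?c i" by blast
    show "x \<in> D"
    proof (cases "i \<le> l1")
      case True
      have "c1 i \<in> D" using i True by (intro c1r) auto
      thus ?thesis using i True by simp
    next
      case False
      have "c2 (i - l1) \<in> D" using i False by (intro c2r) auto
      thus ?thesis using i False by simp
    qed
  qed
  have d: "\<forall>i\<in>{1..l1+l2}. ?c i (?a i) = 1"
  proof
    fix i assume i: "i \<in> {1..l1+l2}"
    show "?c i (?a i) = 1"
    proof (cases "i \<le> l1")
      case True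
      have "c1 i (a1 i) = 1" using i True by (intro c1d) auto
      thus ?thesis using True by simp
    next
      case False
      have "c2 (i - l1) (a2 (i - l1)) = 1" using i False by (intro c2d) auto
      thus ?thesis using False by simp
    qed
  qed
  have o: "\<forall>i j. 1 \<le> i \<and> i < j \<and> j \<le> l1+l2 \<longrightarrow> ?c i (?a j) = 0"
  proof (intro allI impI)
    fix i j assume h: "1 \<le> i \<and> i < j \<and> j \<le> l1+l2"
    show "?c i (?a j) = 0"
    proof (cases "j \<le> l1")
      case True
      have "c1 i (a1 j) = 0" using h True by (intro c1o) auto
      thus ?thesis using h True by simp
    next
      case jF: False
      show ?thesis
      proof (cases "i \<le> l1")
        case True
        have "i \<in> {1..l1}" "j - l1 \<in> {1..l2}" using h jF True by auto
        hence "c1 i (a2 (j - l1)) = 0" using cross by blast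
        thus ?thesis using True jF by simp
      next
        case False
        have "c2 (i - l1) (a2 (j - l1)) = 0" using h False jF by (intro c2o) auto
        thus ?thesis using False jF by simp
      qed
    qed
  qed
  show ?thesis unfolding is_chain_def using ia ic ra rc d o by blast
qed

lemma chain_lift:
  assumes "is_chain I (restr_code I E) l a c"
  shows "\<exists>c'. is_chain I E l a c' \<and> (\<forall>i\<in>{1..l}. c' i \<in> E)"
proof -
  note ai = chain_D(1)[OF assms] and ar = chain_D(2)[OF assms] and ci = chain_D(3)[OF assms]
    and cr = chain_D(4)[OF assms] and cd = chain_D(5)[OF assms] and co = chain_D(6)[OF assms]
  define c' where "c' i = (SOME e. e \<in> E \<and> restrict e I = c i)" for i
  have P: "c' i \<in> E \<and> restrict (c' i) I = c i" if "i \<in> {1..l}" for i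
  proof -
    have "c i \<in> restr_code I E" by (rule cr[OF that])
    then obtain e where e: "e \<in> E" "c i = restrict e I" unfolding restr_code_def by (rule imageE)
    have "e \<in> E \<and> restrict e I = c i" using e by simp
    thus ?thesis unfolding c'_def by (rule someI[where P="\<lambda>e. e \<in> E \<and> restrict e I = c i"])
  qed
  have V: "c' i (a j) = c i (a j)" if "i \<in> {1..l}" "j \<in> {1..l}" for i j
  proof -
    have "a j \<in> I" using ar that(2) by blast
    hence "c' i (a j) = restrict (c' i) I (a j)" by simp
    also have "\<dots> = c i (a j)" using P that(1) by simp
    finally show ?thesis .
  qed
  have inj: "inj_on c' {1..l}"
  proof (rule inj_onI)
    fix i j assume h: "i \<in> {1..l}" "j \<in> {1..l}" "c' i = c' j"
    hence "c i = c j" using P[OF h(1)] P[OF h(2)] by metis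
    thus "i = j" using ci h by (meson inj_onD)
  qed
  have "is_chain I E l a c'"
    unfolding is_chain_def
  proof (intro conjI ballI allI impI)
    show "inj_on a {1..l}" by (rule ai)
    show "a ` {1..l} \<subseteq> I" using ar by blast
    show "inj_on c' {1..l}" by (rule inj)
    show "c' ` {1..l} \<subseteq> E" using P by blast
  next
    fix i assume "i \<in> {1..l}"
    thus "c' i (a i) = 1" using V cd by simp
  next
    fix i j assume h: "1 \<le> i \<and> i < j \<and> j \<le> l"
    hence "c' i (a j) = c i (a j)" using V by simp
    thus "c' i (a j) = 0" using co h by simp
  qed
  thus ?thesis using P by blast
qed

lemma chain_mono_D:
  assumes "is_chain A D l a c" "D \<subseteq> D'"
  shows "is_chain A D' l a c"
  using assms unfolding is_chain_def by blast

lemma CL_empty: "CL {} D = 0"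
proof -
  obtain a c where "is_chain {} D (CL {} D) a c" using CL_attained[of "{}" D] by auto
  from chain_len_le[OF this] show ?thesis by simp
qed

lemma ctype_ge:
  assumes "c \<in> {1..m} \<rightarrow>\<^sub>E {0, 1}" "x \<in> {1..m}" "c x = 1"
  shows "t x \<le> ctype m t c"
  unfolding ctype_def using assms by (intro Max_ge) auto

lemma layer_zero:
  assumes C: "C \<subseteq> {1..m} \<rightarrow>\<^sub>E {0, 1}" and c: "c \<in> code_layer m t C s \<union> code_layer m t C (s + 1)"
    and x: "x \<in> level_set m t s'" and lt: "s + 1 < s'"
  shows "c x = 0"
proof -
  have cC: "c \<in> C" and ct: "ctype m t c \<le> s + 1" using c unfolding code_layer_def by auto
  have xm: "x \<in> {1..m}" and tx: "t x = s'" using x unfolding level_set_def by auto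
  have "c x \<in> {0, 1}" using C cC xm by (auto simp: PiE_def Pi_def)
  moreover have "c x \<noteq> 1"
  proof
    assume "c x = 1"
    moreover have "c \<in> {1..m} \<rightarrow>\<^sub>E {0, 1}" using C cC by blast
    ultimately have "t x \<le> ctype m t c" using xm by (intro ctype_ge)
    thus False using ct tx lt by simp
  qed
  ultimately show ?thesis by simp
qed

lemma spaced_chain:
  fixes m :: nat and C :: "(nat \<Rightarrow> nat) set" and t :: "nat \<Rightarrow> int"
  assumes C: "C \<subseteq> {1..m} \<rightarrow>\<^sub>E {0, 1}" and fin: "finite T"
  shows "(\<forall>s\<in>T. \<forall>s'\<in>T. s < s' \<longrightarrow> s + 2 \<le> s') \<longrightarrow>
    (\<exists>a c. is_chain (\<Union>s\<in>T. level_set m t s) C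
      (\<Sum>s\<in>T. CL (level_set m t s)
            (restr_code (level_set m t s) (code_layer m t C s \<union> code_layer m t C (s + 1)))) a c
     \<and> (\<forall>i\<in>{1..(\<Sum>s\<in>T. CL (level_set m t s)
            (restr_code (level_set m t s) (code_layer m t C s \<union> code_layer m t C (s + 1))))}.
          \<exists>s\<in>T. c i \<in> code_layer m t C s \<union> code_layer m t C (s + 1)))"
  using fin
proof (induction T rule: finite_linorder_max_induct)
  case empty
  show ?case using chain_zero by auto
next
  case (insert b A)
  let ?I = "level_set m t" and ?L = "code_layer m t C"
  let ?f = "\<lambda>s. CL (?I s) (restr_code (?I s) (?L s \<union> ?L (s + 1)))"
  show ?case
  proof
    assume sp: "\<forall>s\<in>insert b A. \<forall>s'\<in>insert b A. s < s' \<longrightarrow> s + 2 \<le> s'"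
    hence "\<forall>s\<in>A. \<forall>s'\<in>A. s < s' \<longrightarrow> s + 2 \<le> s'" by blast
    with insert.IH obtain a1 c1 where ch1: "is_chain (\<Union>s\<in>A. ?I s) C (sum ?f A) a1 c1"
      and inv1: "\<forall>i\<in>{1..sum ?f A}. \<exists>s\<in>A. c1 i \<in> ?L s \<union> ?L (s + 1)" by blast
    have bA: "b \<notin> A" using insert.hyps(2) by blast
    have sb: "s + 2 \<le> b" if "s \<in> A" for s using sp that insert.hyps(2) by blast
    have finI: "finite (?I b)" unfolding level_set_def by simp
    obtain a2 c0 where "is_chain (?I b) (restr_code (?I b) (?L b \<union> ?L (b + 1))) (?f b) a2 c0"
      using CL_attained[OF finI] by blast
    then obtain c2 where ch2': "is_chain (?I b) (?L b \<union> ?L (b + 1)) (?f b) a2 c2"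
      and inv2: "\<forall>i\<in>{1..?f b}. c2 i \<in> ?L b \<union> ?L (b + 1)"
      using chain_lift by blast
    have ch2: "is_chain (?I b) C (?f b) a2 c2"
      using ch2' by (rule chain_mono_D) (auto simp: code_layer_def)
    have dA: "(\<Union>s\<in>A. ?I s) \<inter> ?I b = {}"
      using sb by (fastforce simp: level_set_def)
    have dC: "c1 ` {1..sum ?f A} \<inter> c2 ` {1..?f b} = {}"
    proof (rule ccontr)
      assume "c1 ` {1..sum ?f A} \<inter> c2 ` {1..?f b} \<noteq> {}"
      then obtain i j where i: "i \<in> {1..sum ?f A}" and j: "j \<in> {1..?f b}" and e: "c1 i = c2 j"
        by blast
      obtain s where s: "s \<in> A" "c1 i \<in> ?L s \<union> ?L (s + 1)" using inv1 i by blast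
      have "ctype m t (c1 i) \<le> s + 1" using s(2) by (auto simp: code_layer_def)
      moreover have "ctype m t (c2 j) \<ge> b" using inv2 j by (auto simp: code_layer_def)
      ultimately show False using e sb[OF s(1)] by simp
    qed
    have cross: "\<forall>i\<in>{1..sum ?f A}. \<forall>j\<in>{1..?f b}. c1 i (a2 j) = 0"
    proof (intro ballI)
      fix i j assume i: "i \<in> {1..sum ?f A}" and j: "j \<in> {1..?f b}"
      obtain s where s: "s \<in> A" "c1 i \<in> ?L s \<union> ?L (s + 1)" using inv1 i by blast
      have "a2 j \<in> ?I b" using chain_D(2)[OF ch2 j] .
      thus "c1 i (a2 j) = 0" using layer_zero[OF C s(2)] sb[OF s(1)] by simp
    qed
    have ch: "is_chain ((\<Union>s\<in>A. ?I s) \<union> ?I b) C (sum ?f A + ?f b)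
       (\<lambda>i. if i \<le> sum ?f A then a1 i else a2 (i - sum ?f A))
       (\<lambda>i. if i \<le> sum ?f A then c1 i else c2 (i - sum ?f A))"
      by (rule chain_concat[OF ch1 ch2 dA dC cross])
    have eqS: "sum ?f (insert b A) = sum ?f A + ?f b" using bA insert.hyps(1) by simp
    have eqU: "(\<Union>s\<in>insert b A. ?I s) = (\<Union>s\<in>A. ?I s) \<union> ?I b" by blast
    have inv: "\<forall>i\<in>{1..sum ?f A + ?f b}. \<exists>s\<in>insert b A.
       (\<lambda>i. if i \<le> sum ?f A then c1 i else c2 (i - sum ?f A)) i \<in> ?L s \<union> ?L (s + 1)"
    proof
      fix i assume i: "i \<in> {1..sum ?f A + ?f b}"
      show "\<exists>s\<in>insert b A.
       (\<lambda>i. if i \<le> sum ?f A then c1 i else c2 (i - sum ?f A)) i \<in> ?L s \<union> ?L (s + 1)"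
      proof (cases "i \<le> sum ?f A")
        case True
        hence "i \<in> {1..sum ?f A}" using i by simp
        thus ?thesis using inv1 True by auto
      next
        case False
        hence "i - sum ?f A \<in> {1..?f b}" using i by auto
        hence "c2 (i - sum ?f A) \<in> ?L b \<union> ?L (b + 1)" using inv2 by blast
        thus ?thesis using False by auto
      qed
    qed
    show "\<exists>a c. is_chain (\<Union>s\<in>insert b A. ?I s) C (sum ?f (insert b A)) a c
     \<and> (\<forall>i\<in>{1..sum ?f (insert b A)}. \<exists>s\<in>insert b A. c i \<in> ?L s \<union> ?L (s + 1))"
      unfolding eqS eqU using ch inv by blast
  qed
qed

theorem mainTheorem9:
  fixes m :: nat and C :: "(nat \<Rightarrow> nat) set" and t :: "nat \<Rightarrow> int"
  assumes "C \<subseteq> {1..m} \<rightarrow>\<^sub>E {0, 1}"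
  shows "Sum_any (\<lambda>s. CL (level_set m t s)
            (restr_code (level_set m t s) (code_layer m t C s \<union> code_layer m t C (s + 1))))
         \<le> 2 * CL {1..m} C"
proof -
  let ?I = "level_set m t" and ?L = "code_layer m t C"
  let ?f = "\<lambda>s. CL (?I s) (restr_code (?I s) (?L s \<union> ?L (s + 1)))"
  let ?S = "t ` {1..m}"
  have finS: "finite ?S" by simp
  have sub: "{s. ?f s \<noteq> 0} \<subseteq> ?S"
  proof
    fix s assume "s \<in> {s. ?f s \<noteq> 0}"
    hence "?I s \<noteq> {}" using CL_empty by force
    thus "s \<in> ?S" unfolding level_set_def by auto
  qed
  have e1: "Sum_any ?f = sum ?f ?S"
    by (rule Sum_any.expand_superset[OF finS sub])
  have e2: "sum ?f ?S = sum ?f (?S \<inter> {s. even s}) + sum ?f (?S - {s. even s})"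
    by (rule sum.Int_Diff[OF finS])
  have bound: "sum ?f T \<le> CL {1..m} C" if T: "T \<subseteq> ?S"
    and sp: "\<forall>s\<in>T. \<forall>s'\<in>T. s < s' \<longrightarrow> s + 2 \<le> s'" for T
  proof -
    have "finite T" using T finS finite_subset by blast
    then obtain a c where ch: "is_chain (\<Union>s\<in>T. ?I s) C (sum ?f T) a c"
      using spaced_chain[OF assms, of T t] sp by blast
    have "(\<Union>s\<in>T. ?I s) \<subseteq> {1..m}" unfolding level_set_def by auto
    from chain_mono[OF ch this] show ?thesis by (rule CL_upper) simp
  qed
  have par: "s + 2 \<le> s'" if "s < s'" "even s = even s'" for s s' :: int
    using that by presburger
  have b1: "sum ?f (?S \<inter> {s. even s}) \<le> CL {1..m} C"
  proof (rule bound)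
    show "\<forall>s\<in>?S \<inter> {s. even s}. \<forall>s'\<in>?S \<inter> {s. even s}. s < s' \<longrightarrow> s + 2 \<le> s'"
      using par by auto
  qed auto
  have b2: "sum ?f (?S - {s. even s}) \<le> CL {1..m} C"
  proof (rule bound)
    show "\<forall>s\<in>?S - {s. even s}. \<forall>s'\<in>?S - {s. even s}. s < s' \<longrightarrow> s + 2 \<le> s'"
      using par by auto
  qed auto
  show ?thesis using e1 e2 b1 b2 by linarith
qed

end
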